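(* Fix an arbitrary execution of Algorithm $\mathrm{tree}(G)$ on $G$, and let the rank $r$ and the set $U$ be as defined in the context. If $u,v,w$ are distinct vertices of $G$ with $uv,vw\in E(G)$, $\{u,v\}\subseteq U$, and $r(u)<r(v)<r(w)$, then $d_G(v)=2$.
   Context: $G$ is a finite connected simple undirected graph containing a vertex $a$ with $d_G(a)\ge 2$. For a subtree $T$ of $G$ and a vertex $u$ of $T$: - $V_T(u)$ is the set of vertices $v\in V(G)\setminus V(T)$ with $uv\in E(G)$. - $E_T(u)$ is the set of edges $uv$ of $G$ with $v\in V_T(u)$. - If $|V_T(u)|=1$, then $v_T(u)$ denotes the unique vertex of $V_T(u)$. Three sets of vertices of $T$ are defined: - $W_2(T)=\{u\in V(T): |V_T(u)|\ge 2\}$. - $W_1(T)=\{u\in V(T): |V_T(u)|=1,\ |V_{T\cup E_T(u)}(v_T(u))|\ge 2\}$. - $W_0(T)=\{u\in V(T): |V_T(u)|=1,\ |V_{T\cup E_T(u)}(v_T(u))|\le 1\}$. Algorithm $\mathrm{tree}(G)$ runs as follows. 1. Start with $T=\{a\}$. 2. While $V(T)\ne V(G)$: - If $W_2(T)\ne\emptyset$, pick an arbitrary $u\in W_2(T)$. - Else, if $W_1(T)\neq\emptyset$, pick an arbitrary $u\in W_1(T)$. - Else, let $u$ be the vertex of $W_0(T)$ that joined $V(T)$ most recently. - Set $T:=T\cup E_T(u)$ ("expand $T$ at $u$"). 3. Return $T$. Now fix an execution and let $T$ be the returned spanning tree, rooted at $a$. For $v\ne a$, let $p(v)$ be the parent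 of $v$ in $T$. For each vertex $u$ with $d_T(u)\ge 2$, the algorithm expanded at $u$ exactly once; let $T_u$ be the tree just before that expansion. Thus $u=p(v)$ if and only if $v\in V_{T_u}(u)$. The rank $r:V(G)\to\mathbb{Z}$ is defined by $r(a)=1$ and, for each edge $uv$ of $T$ with $u=p(v)$: - $r(v)=r(u)$ if $u\in W_2(T_u)$; - $r(v)=1+\max_{w\in V(T_u)} r(w)$ otherwise. $U$ is the set of vertices $v$ such that no other vertex has rank $r(v)$. *)

theory Defs
  imports Main
begin

definition simple_graph :: "'a set \<Rightarrow> ('a \<Rightarrow> 'a \<Rightarrow> bool) \<Rightarrow> bool" where
  "simple_graph V E \<longleftrightarrow> finite V \<and> (\<forall>x y. E x y \<longrightarrow> x \<in> V \<and> y \<in> V)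
     \<and> (\<forall>x y. E x y \<longrightarrow> E y x) \<and> (\<forall>x. \<not> E x x)"

definition connected_graph :: "'a set \<Rightarrow> ('a \<Rightarrow> 'a \<Rightarrow> bool) \<Rightarrow> bool" where
  "connected_graph V E \<longleftrightarrow> V \<noteq> {} \<and> (\<forall>x\<in>V. \<forall>y\<in>V. E\<^sup>*\<^sup>* x y)"

definition degree :: "'a set \<Rightarrow> ('a \<Rightarrow> 'a \<Rightarrow> bool) \<Rightarrow> 'a \<Rightarrow> nat" where
  "degree V E v = card {w \<in> V. E v w}"

definition VT :: "'a set \<Rightarrow> ('a \<Rightarrow> 'a \<Rightarrow> bool) \<Rightarrow> 'a set \<Rightarrow> 'a \<Rightarrow> 'a set" where
  "VT V E T u = {v \<in> V - T. E u v}"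

definition W2 :: "'a set \<Rightarrow> ('a \<Rightarrow> 'a \<Rightarrow> bool) \<Rightarrow> 'a set \<Rightarrow> 'a set" where
  "W2 V E T = {u \<in> T. card (VT V E T u) \<ge> 2}"

text \<open>For |V_T(u)| = 1, the tree T \<union> E_T(u) has vertex set T \<union> V_T(u).\<close>
definition W1 :: "'a set \<Rightarrow> ('a \<Rightarrow> 'a \<Rightarrow> bool) \<Rightarrow> 'a set \<Rightarrow> 'a set" where
  "W1 V E T = {u \<in> T. card (VT V E T u) = 1 \<and>
      card (VT V E (T \<union> VT V E T u) (the_elem (VT V E T u))) \<ge> 2}"

definition W0 :: "'a set \<Rightarrow> ('a \<Rightarrow> 'a \<Rightarrow> bool) \<Rightarrow> 'a set \<Rightarrow> 'a set" where
  "W0 V E T = {u \<in> T. card (VT V E T u) = 1 \<and>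
      card (VT V E (T \<union> VT V E T u) (the_elem (VT V E T u))) \<le> 1}"

text \<open>An execution is recorded as the list us of expansion vertices; tsets i is V(T) after i expansions.\<close>
primrec tsets :: "'a set \<Rightarrow> ('a \<Rightarrow> 'a \<Rightarrow> bool) \<Rightarrow> 'a \<Rightarrow> 'a list \<Rightarrow> nat \<Rightarrow> 'a set" where
  "tsets V E a us 0 = {a}"
| "tsets V E a us (Suc i) = tsets V E a us i \<union> VT V E (tsets V E a us i) (us ! i)"

definition join_time :: "'a set \<Rightarrow> ('a \<Rightarrow> 'a \<Rightarrow> bool) \<Rightarrow> 'a \<Rightarrow> 'a list \<Rightarrow> 'a \<Rightarrow> nat" where
  "join_time V E a us x = (LEAST j. x \<in> tsets V E a us j)"

definition is_execution :: "'a set \<Rightarrow> ('a \<Rightarrow> 'a \<Rightarrow> bool) \<Rightarrow> 'a \<Rightarrow> 'a list \<Rightarrow> bool" where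
  "is_execution V E a us \<longleftrightarrow>
     (\<forall>i < length us.
        (let T = tsets V E a us i; u = us ! i in
          T \<noteq> V \<and>
          (if W2 V E T \<noteq> {} then u \<in> W2 V E T
           else if W1 V E T \<noteq> {} then u \<in> W1 V E T
           else u \<in> W0 V E T \<and> (\<forall>x \<in> W0 V E T. join_time V E a us x \<le> join_time V E a us u))))
     \<and> tsets V E a us (length us) = V"

primrec rank_at :: "'a set \<Rightarrow> ('a \<Rightarrow> 'a \<Rightarrow> bool) \<Rightarrow> 'a \<Rightarrow> 'a list \<Rightarrow> nat \<Rightarrow> 'a \<Rightarrow> int" where
  "rank_at V E a us 0 = (\<lambda>v. 1)"
| "rank_at V E a us (Suc i) =
     (let T = tsets V E a us i; u = us ! i; r = rank_at V E a us i in
       (\<lambda>v. if v \<in> VT V E T u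
             then (if u \<in> W2 V E T then r u else 1 + Max (r ` T))
             else r v))"

definition rank :: "'a set \<Rightarrow> ('a \<Rightarrow> 'a \<Rightarrow> bool) \<Rightarrow> 'a \<Rightarrow> 'a list \<Rightarrow> 'a \<Rightarrow> int" where
  "rank V E a us = rank_at V E a us (length us)"

definition Uset :: "'a set \<Rightarrow> ('a \<Rightarrow> 'a \<Rightarrow> bool) \<Rightarrow> 'a \<Rightarrow> 'a list \<Rightarrow> 'a set" where
  "Uset V E a us = {v \<in> V. \<forall>w \<in> V. w \<noteq> v \<longrightarrow> rank V E a us w \<noteq> rank V E a us v}"

end

theory Submission
  imports Defs
begin

lemma card_le1_mem:
  assumes "finite A" "card A \<le> 1" "x \<in> A" shows "A = {x}"
proof -
  have "card A > 0" using assms card_gt_0_iff by blast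
  then have "card A = 1" using assms(2) by simp
  then obtain z where z: "A = {z}" by (rule card_1_singletonE)
  then show ?thesis using assms(3) by simp
qed

context
  fixes V :: "'a set" and E :: "'a \<Rightarrow> 'a \<Rightarrow> bool" and a :: 'a and us :: "'a list"
  assumes sg: "simple_graph V E" and aV: "a \<in> V" and ex: "is_execution V E a us"
begin

lemma finV: "finite V" using sg simple_graph_def by auto
lemma VT_sub: "VT V E T x \<subseteq> V" by (auto simp: VT_def)
lemma finVT: "finite (VT V E T x)" using VT_sub finV finite_subset by blast
lemma VT_disj: "y \<in> VT V E T x \<Longrightarrow> y \<notin> T" by (auto simp: VT_def)
lemma VT_anti: "T \<subseteq> T' \<Longrightarrow> VT V E T' x \<subseteq> VT V E T x" by (auto simp: VT_def)
lemma VT_mem: "y \<in> V \<Longrightarrow> y \<notin> T \<Longrightarrow> E x y \<Longrightarrow> y \<in> VT V E T x" by (auto simp: VT_def)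
lemma Esym: "E x y \<Longrightarrow> E y x" using sg unfolding simple_graph_def by blast
lemma Eirr: "E x y \<Longrightarrow> x \<noteq> y" using sg unfolding simple_graph_def by blast

lemma tsets_mono: "i \<le> k \<Longrightarrow> tsets V E a us i \<subseteq> tsets V E a us k"
  by (induction k) (auto simp: le_Suc_eq)

lemma tsets_sub: "tsets V E a us k \<subseteq> V"
  using aV VT_sub by (induction k) auto

lemma finT: "finite (tsets V E a us k)" using tsets_sub finV finite_subset by blast

lemma a_in: "a \<in> tsets V E a us k" using tsets_mono[of 0 k] by simp

lemma exec_end: "tsets V E a us (length us) = V"
  using ex unfolding is_execution_def by simp

lemma exec_step:
  assumes "k < length us"
  shows "tsets V E a us k \<noteq> V"
    and "W2 V E (tsets V E a us k) \<noteq> {} \<Longrightarrow> us ! k \<in> W2 V E (tsets V E a us k)"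
    and "W2 V E (tsets V E a us k) = {} \<Longrightarrow> W1 V E (tsets V E a us k) \<noteq> {} \<Longrightarrow> us ! k \<in> W1 V E (tsets V E a us k)"
    and "W2 V E (tsets V E a us k) = {} \<Longrightarrow> W1 V E (tsets V E a us k) = {} \<Longrightarrow> us ! k \<in> W0 V E (tsets V E a us k)"
  using ex assms unfolding is_execution_def Let_def by auto

lemma us_in_T: "k < length us \<Longrightarrow> us ! k \<in> tsets V E a us k"
  using exec_step[of k] by (auto simp: W2_def W1_def W0_def split: if_splits)

lemma nonW2_single:
  assumes "k < length us" "us ! k \<notin> W2 V E (tsets V E a us k)" "y \<in> VT V E (tsets V E a us k) (us ! k)"
  shows "W2 V E (tsets V E a us k) = {}" "VT V E (tsets V E a us k) (us ! k) = {y}"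
proof -
  show W: "W2 V E (tsets V E a us k) = {}" using exec_step(2)[OF assms(1)] assms(2) by blast
  have "card (VT V E (tsets V E a us k) (us ! k)) = 1"
    using exec_step(3,4)[OF assms(1) W] by (cases "W1 V E (tsets V E a us k) = {}") (auto simp: W1_def W0_def)
  then show "VT V E (tsets V E a us k) (us ! k) = {y}"
    using card_le1_mem[OF finVT _ assms(3)] by simp
qed

lemma rank_stable: "y \<in> tsets V E a us k \<Longrightarrow> k \<le> k' \<Longrightarrow> rank_at V E a us k' y = rank_at V E a us k y"
proof (induction k')
  case 0 then show ?case by simp
next
  case (Suc k')
  show ?case
  proof (cases "k = Suc k'")
    case True then show ?thesis by simp
  next
    case False
    then have "k \<le> k'" using Suc by simp
    then have "y \<in> tsets V E a us k'" using tsets_mono Suc by blast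
    then have "y \<notin> VT V E (tsets V E a us k') (us ! k')" using VT_disj by blast
    then show ?thesis using Suc \<open>k \<le> k'\<close> by (simp add: Let_def)
  qed
qed

lemma rank_eq: "y \<in> tsets V E a us k \<Longrightarrow> k \<le> length us \<Longrightarrow> rank V E a us y = rank_at V E a us k y"
  unfolding rank_def using rank_stable by blast

lemma rank_new:
  assumes "k < length us" "y \<in> VT V E (tsets V E a us k) (us ! k)"
  shows "rank V E a us y = (if us ! k \<in> W2 V E (tsets V E a us k) then rank V E a us (us ! k)
            else 1 + Max (rank_at V E a us k ` tsets V E a us k))"
proof -
  have "y \<in> tsets V E a us (Suc k)" using assms by simp
  then have "rank V E a us y = rank_at V E a us (Suc k) y" by (rule rank_eq) (use assms in simp)
  moreover have "rank V E a us (us ! k) = rank_at V E a us k (us ! k)"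
    using rank_eq us_in_T assms by simp
  ultimately show ?thesis using assms by (simp add: Let_def)
qed

lemma rank_fresh:
  assumes "k < length us" "us ! k \<notin> W2 V E (tsets V E a us k)" "y \<in> VT V E (tsets V E a us k) (us ! k)"
    "z \<in> tsets V E a us k"
  shows "rank V E a us z < rank V E a us y"
proof -
  have "rank V E a us z = rank_at V E a us k z" using rank_eq assms by simp
  also have "\<dots> \<le> Max (rank_at V E a us k ` tsets V E a us k)" using finT assms(4) by simp
  finally show ?thesis using rank_new[OF assms(1,3)] assms(2) by simp
qed

lemma join:
  assumes "x \<in> V" "x \<noteq> a"
  shows "\<exists>k < length us. x \<notin> tsets V E a us k \<and> x \<in> VT V E (tsets V E a us k) (us ! k)"
proof -
  have ex1: "x \<in> tsets V E a us (length us)" using exec_end assms by simp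
  define k where "k = (LEAST k. x \<in> tsets V E a us k)"
  have k1: "x \<in> tsets V E a us k" unfolding k_def using ex1 by (rule LeastI)
  have k2: "k \<le> length us" unfolding k_def using ex1 by (rule Least_le)
  have "k \<noteq> 0"
  proof
    assume "k = 0" with k1 assms show False by simp
  qed
  then obtain m where m: "k = Suc m" using not0_implies_Suc by blast
  have "x \<notin> tsets V E a us m"
    using not_less_Least[of m "\<lambda>k. x \<in> tsets V E a us k"] m unfolding k_def by simp
  then show ?thesis using k1 k2 m by (intro exI[of _ m]) auto
qed

lemma join_unique:
  assumes "x \<notin> tsets V E a us i" "x \<in> tsets V E a us (Suc i)"
    "x \<notin> tsets V E a us j" "x \<in> tsets V E a us (Suc j)"
  shows "i = j"
proof (rule ccontr)
  assume "i \<noteq> j"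
  then have "Suc i \<le> j \<or> Suc j \<le> i" by linarith
  then show False using tsets_mono assms by blast
qed


lemma U_nonW2_parent:
  assumes "x \<in> Uset V E a us" "k < length us" "x \<in> VT V E (tsets V E a us k) (us ! k)"
  shows "us ! k \<notin> W2 V E (tsets V E a us k)"
proof
  assume W: "us ! k \<in> W2 V E (tsets V E a us k)"
  have r: "rank V E a us x = rank V E a us (us ! k)" using rank_new[OF assms(2,3)] W by simp
  have p: "us ! k \<in> tsets V E a us k" using us_in_T assms(2) by simp
  then have a1: "us ! k \<in> V" and a2: "us ! k \<noteq> x" using tsets_sub VT_disj[OF assms(3)] by auto
  have "\<forall>w\<in>V. w \<noteq> x \<longrightarrow> rank V E a us w \<noteq> rank V E a us x"
    using assms(1) by (simp add: Uset_def)
  then have "rank V E a us (us ! k) \<noteq> rank V E a us x" using a1 a2 by simp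
  then show False using r by simp
qed

lemma U_not_W2_exp:
  assumes "x \<in> Uset V E a us" "k < length us" "us ! k = x"
  shows "x \<notin> W2 V E (tsets V E a us k)"
proof
  assume W: "x \<in> W2 V E (tsets V E a us k)"
  then have "card (VT V E (tsets V E a us k) x) \<ge> 2" by (simp add: W2_def)
  then have "VT V E (tsets V E a us k) x \<noteq> {}" by auto
  then obtain y where y: "y \<in> VT V E (tsets V E a us k) x" by blast
  have r: "rank V E a us y = rank V E a us x" using rank_new[OF assms(2)] y W assms(3) by simp
  have "x \<in> tsets V E a us k" using W by (simp add: W2_def)
  then have a1: "y \<in> V" and a2: "y \<noteq> x" using VT_sub VT_disj y by auto
  have "\<forall>w\<in>V. w \<noteq> x \<longrightarrow> rank V E a us w \<noteq> rank V E a us x"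
    using assms(1) by (simp add: Uset_def)
  then have "rank V E a us y \<noteq> rank V E a us x" using a1 a2 by simp
  then show False using r by simp
qed

lemma a_notin_U:
  assumes "degree V E a \<ge> 2" "V \<noteq> {a}"
  shows "a \<notin> Uset V E a us"
proof
  assume aU: "a \<in> Uset V E a us"
  have n: "0 < length us"
  proof (rule ccontr)
    assume "\<not> 0 < length us"
    then have "length us = 0" by simp
    then show False using exec_end assms(2) by simp
  qed
  have "VT V E {a} a = {w \<in> V. E a w}" using Eirr by (auto simp: VT_def)
  then have "a \<in> W2 V E (tsets V E a us 0)" using assms(1) by (simp add: W2_def degree_def)
  then have "us ! 0 \<in> W2 V E (tsets V E a us 0)" using exec_step(2)[OF n] by blast
  then have "us ! 0 = a" by (simp add: W2_def)
  then show False using U_not_W2_exp[OF aU n] \<open>a \<in> W2 V E (tsets V E a us 0)\<close> by simp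
qed

lemma W2_empty_step:
  assumes "k < length us" "W2 V E (tsets V E a us k) = {}"
    "VT V E (tsets V E a us k) (us ! k) = {y}" "card (VT V E (tsets V E a us (Suc k)) y) \<le> 1"
  shows "W2 V E (tsets V E a us (Suc k)) = {}"
proof -
  have "z \<notin> W2 V E (tsets V E a us (Suc k))" for z
  proof
    assume z: "z \<in> W2 V E (tsets V E a us (Suc k))"
    then have z1: "z \<in> tsets V E a us k \<or> z = y" using assms(3) by (auto simp: W2_def)
    show False
    proof (cases "z = y")
      case True then show False using z assms(4) by (simp add: W2_def)
    next
      case False
      then have zk: "z \<in> tsets V E a us k" using z1 by simp
      then have "card (VT V E (tsets V E a us k) z) < 2" using assms(2) by (auto simp: W2_def)
      moreover have "card (VT V E (tsets V E a us (Suc k)) z) \<le> card (VT V E (tsets V E a us k) z)"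
        by (rule card_mono[OF finVT VT_anti]) simp
      ultimately show False using z by (simp add: W2_def)
    qed
  qed
  then show ?thesis by blast
qed

lemma U_out_le1:
  assumes "x \<in> Uset V E a us" "k < length us" "us ! k \<notin> W2 V E (tsets V E a us k)"
    "VT V E (tsets V E a us k) (us ! k) = {x}"
  shows "card (VT V E (tsets V E a us (Suc k)) x) \<le> 1"
proof (rule ccontr)
  assume c: "\<not> card (VT V E (tsets V E a us (Suc k)) x) \<le> 1"
  then have "VT V E (tsets V E a us (Suc k)) x \<noteq> {}" by auto
  then obtain y where y: "y \<in> VT V E (tsets V E a us (Suc k)) x" by blast
  have W: "W2 V E (tsets V E a us k) = {}" using nonW2_single[OF assms(2,3)] assms(4) by blast
  have "tsets V E a us (Suc k) \<noteq> V" using y VT_sub VT_disj by blast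
  then have sk: "Suc k < length us" using exec_end assms(2)
    by (metis Suc_lessI)
  have xin: "x \<in> W2 V E (tsets V E a us (Suc k))" using c assms(4) by (auto simp: W2_def)
  have "W2 V E (tsets V E a us (Suc k)) \<subseteq> {x}"
  proof
    fix z assume z: "z \<in> W2 V E (tsets V E a us (Suc k))"
    show "z \<in> {x}"
    proof (rule ccontr)
      assume "z \<notin> {x}"
      then have zk: "z \<in> tsets V E a us k" using z assms(4) by (auto simp: W2_def)
      then have "card (VT V E (tsets V E a us k) z) < 2" using W by (auto simp: W2_def)
      moreover have "card (VT V E (tsets V E a us (Suc k)) z) \<le> card (VT V E (tsets V E a us k) z)"
        by (rule card_mono[OF finVT VT_anti]) simp
      ultimately show False using z by (simp add: W2_def)
    qed
  qed
  moreover have "us ! Suc k \<in> W2 V E (tsets V E a us (Suc k))" using exec_step(2)[OF sk] xin by blast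
  ultimately have "us ! Suc k = x" by blast
  then show False using U_not_W2_exp[OF assms(1) sk] xin by simp
qed


lemma main:
  assumes deg: "degree V E a \<ge> 2"
    and uV: "u \<in> V" and vV: "v \<in> V" and wV: "w \<in> V"
    and uv: "u \<noteq> v" and vw: "v \<noteq> w" and uw: "u \<noteq> w"
    and Euv: "E u v" and Evw: "E v w"
    and uU: "u \<in> Uset V E a us" and vU: "v \<in> Uset V E a us"
    and r1: "rank V E a us u < rank V E a us v" and r2: "rank V E a us v < rank V E a us w"
  shows "degree V E v = 2"
proof -
  let ?T = "tsets V E a us"
  let ?n = "length us"
  have Vna: "V \<noteq> {a}" using uV vV uv by auto
  have ua: "u \<noteq> a" using a_notin_U[OF deg Vna] uU by auto
  have va: "v \<noteq> a" using a_notin_U[OF deg Vna] vU by auto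
  obtain i where i: "i < ?n" "v \<notin> ?T i" "v \<in> VT V E (?T i) (us ! i)" using join[OF vV va] by blast
  have pi: "us ! i \<notin> W2 V E (?T i)" using U_nonW2_parent[OF vU i(1) i(3)] .
  have W2i: "W2 V E (?T i) = {}" and VTi: "VT V E (?T i) (us ! i) = {v}"
    using nonW2_single[OF i(1) pi i(3)] by auto
  have Ti1: "?T (Suc i) = ?T i \<union> {v}" using VTi by simp
  have rv: "\<And>z. z \<in> ?T i \<Longrightarrow> rank V E a us z < rank V E a us v"
    using rank_fresh[OF i(1) pi i(3)] by blast
  have wTi: "w \<notin> ?T i" using rv r2 by force
  have wTi1: "w \<notin> ?T (Suc i)" using wTi vw Ti1 by auto
  have cv: "card (VT V E (?T (Suc i)) v) \<le> 1" using U_out_le1[OF vU i(1) pi VTi] .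
  have "w \<in> VT V E (?T (Suc i)) v" using VT_mem[OF wV wTi1 Evw] .
  then have VTv: "VT V E (?T (Suc i)) v = {w}" using card_le1_mem[OF finVT cv] by blast
  obtain j where j: "j < ?n" "u \<notin> ?T j" "u \<in> VT V E (?T j) (us ! j)" using join[OF uV ua] by blast
  have pj: "us ! j \<notin> W2 V E (?T j)" using U_nonW2_parent[OF uU j(1) j(3)] .
  have W2j: "W2 V E (?T j) = {}" and VTj: "VT V E (?T j) (us ! j) = {u}"
    using nonW2_single[OF j(1) pj j(3)] by auto
  have Tj1: "?T (Suc j) = ?T j \<union> {u}" using VTj by simp
  have ru: "\<And>z. z \<in> ?T j \<Longrightarrow> rank V E a us z < rank V E a us u"
    using rank_fresh[OF j(1) pj j(3)] by blast
  have vTj: "v \<notin> ?T j" using ru r1 by force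
  have vTj1: "v \<notin> ?T (Suc j)" using vTj uv Tj1 by auto
  have ji: "Suc j \<le> i"
  proof (rule ccontr)
    assume "\<not> Suc j \<le> i"
    then have "i = j \<or> Suc i \<le> j" by linarith
    then show False
    proof
      assume "i = j" then show False using VTi VTj uv by simp
    next
      assume "Suc i \<le> j"
      then have "?T (Suc i) \<subseteq> ?T j" by (rule tsets_mono)
      then show False using Ti1 vTj by auto
    qed
  qed
  have uTi: "u \<in> ?T i" using tsets_mono[OF ji] Tj1 by auto
  have cu: "card (VT V E (?T (Suc j)) u) \<le> 1" using U_out_le1[OF uU j(1) pj VTj] .
  have "v \<in> VT V E (?T (Suc j)) u" using VT_mem[OF vV vTj1 Euv] .
  then have VTu: "VT V E (?T (Suc j)) u = {v}" using card_le1_mem[OF finVT cu] by blast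
  have wTj1: "w \<notin> ?T (Suc j)" using tsets_mono[OF ji] wTi by auto
  have wTj: "w \<notin> ?T j" using wTj1 Tj1 by auto
  have noW1j: "W1 V E (?T j) = {}"
  proof (rule ccontr)
    assume "W1 V E (?T j) \<noteq> {}"
    then have "us ! j \<in> W1 V E (?T j)" using exec_step(3)[OF j(1) W2j] by blast
    then have "card (VT V E (?T j \<union> {u}) u) \<ge> 2" using VTj by (simp add: W1_def)
    then show False using VTu Tj1 by simp
  qed
  have nbr: "x = u" if xTi: "x \<in> ?T i" and Evx: "E v x" for x
  proof (rule ccontr)
    assume xu: "x \<noteq> u"
    have xV: "x \<in> V" using xTi tsets_sub by blast
    have xv: "x \<noteq> v" using Eirr Evx by blast
    show False
    proof (cases "x \<in> ?T j")
      case True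
      have "v \<in> VT V E (?T j) x" using VT_mem[OF vV vTj Esym[OF Evx]] .
      moreover have "card (VT V E (?T j) x) \<le> 1" using True W2j by (force simp: W2_def)
      ultimately have VTx: "VT V E (?T j) x = {v}" using card_le1_mem[OF finVT] by blast
      have "{u, w} \<subseteq> VT V E (?T j \<union> {v}) v"
        using VT_mem[OF uV _ Esym[OF Euv]] VT_mem[OF wV _ Evw] j(2) wTj uv vw by auto
      then have "card {u, w} \<le> card (VT V E (?T j \<union> {v}) v)" by (rule card_mono[OF finVT])
      then have "card (VT V E (?T j \<union> {v}) v) \<ge> 2" using uw by simp
      then have "x \<in> W1 V E (?T j)" using True VTx by (simp add: W1_def)
      then show False using noW1j by blast
    next
      case False
      have xTj1: "x \<notin> ?T (Suc j)" using False xu Tj1 by auto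
      have sj: "Suc j < ?n"
      proof (rule ccontr)
        assume "\<not> Suc j < ?n"
        then have "Suc j = ?n" using j(1) by simp
        then show False using exec_end wTj1 wV by simp
      qed
      have W2j1: "W2 V E (?T (Suc j)) = {}" using W2_empty_step[OF j(1) W2j VTj cu] .
      have xw: "x \<noteq> w" using xTi wTi by blast
      have "{x, w} \<subseteq> VT V E (?T (Suc j) \<union> {v}) v"
        using VT_mem[OF xV _ Evx] VT_mem[OF wV _ Evw] xTj1 wTj1 xv vw by auto
      then have "card {x, w} \<le> card (VT V E (?T (Suc j) \<union> {v}) v)" by (rule card_mono[OF finVT])
      then have "card (VT V E (?T (Suc j) \<union> {v}) v) \<ge> 2" using xw by simp
      moreover have "insert u (insert v (?T j)) = insert v (insert u (?T j))" by blast
      ultimately have "u \<in> W1 V E (?T (Suc j))" using VTu Tj1 by (simp add: W1_def)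
      then have cW1: "us ! Suc j \<in> W1 V E (?T (Suc j))" using exec_step(3)[OF sj W2j1] by blast
      show False
      proof (cases "us ! Suc j = u")
        case True
        then have "v \<in> ?T (Suc (Suc j))" using VTu by simp
        then have "i = Suc j" using join_unique[OF i(2) _ vTj1] Ti1 by blast
        then show False using xTi xTj1 by simp
      next
        case cu': False
        let ?c = "us ! Suc j"
        have cTj: "?c \<in> ?T j" using cW1 cu' Tj1 by (auto simp: W1_def)
        have "card (VT V E (?T (Suc j)) ?c) = 1" using cW1 by (simp add: W1_def)
        then obtain y where y: "VT V E (?T (Suc j)) ?c = {y}" by (metis card_1_singletonE)
        have sub: "VT V E (?T (Suc j)) ?c \<subseteq> VT V E (?T j) ?c" by (rule VT_anti) simp
        moreover have "card (VT V E (?T j) ?c) \<le> 1" using cTj W2j by (force simp: W2_def)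
        ultimately have yj: "VT V E (?T j) ?c = {y}" using y card_le1_mem[OF finVT] by blast
        have "card (VT V E (?T (Suc j) \<union> {y}) y) \<ge> 2" using cW1 y by (simp add: W1_def)
        moreover have "card (VT V E (?T (Suc j) \<union> {y}) y) \<le> card (VT V E (?T j \<union> {y}) y)"
          by (rule card_mono[OF finVT VT_anti]) (use Tj1 in auto)
        ultimately have "card (VT V E (?T j \<union> {y}) y) \<ge> 2" by simp
        then have "?c \<in> W1 V E (?T j)" using cTj yj by (simp add: W1_def)
        then show False using noW1j by blast
      qed
    qed
  qed
  have "{y \<in> V. E v y} = {u, w}"
  proof
    show "{y \<in> V. E v y} \<subseteq> {u, w}"
    proof
      fix y assume y: "y \<in> {y \<in> V. E v y}"
      show "y \<in> {u, w}"
      proof (cases "y \<in> ?T (Suc i)")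
        case True
        then have "y \<in> ?T i" using Ti1 Eirr y by auto
        then show ?thesis using nbr y by auto
      next
        case False
        then have "y \<in> VT V E (?T (Suc i)) v" using y VT_mem by auto
        then show ?thesis using VTv by auto
      qed
    qed
    show "{u, w} \<subseteq> {y \<in> V. E v y}" using uV wV Esym[OF Euv] Evw by auto
  qed
  then show ?thesis using uw by (simp add: degree_def)
qed
end

theorem lemma1:
  fixes V :: "'a set" and E :: "'a \<Rightarrow> 'a \<Rightarrow> bool" and a u v w :: 'a and us :: "'a list"
  assumes "simple_graph V E" and "connected_graph V E"
    and "a \<in> V" and "degree V E a \<ge> 2"
    and "is_execution V E a us"
    and "u \<in> V" and "v \<in> V" and "w \<in> V"
    and "u \<noteq> v" and "v \<noteq> w" and "u \<noteq> w"
    and "E u v" and "E v w"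
    and "u \<in> Uset V E a us" and "v \<in> Uset V E a us"
    and "rank V E a us u < rank V E a us v" and "rank V E a us v < rank V E a us w"
  shows "degree V E v = 2"
  using main[OF assms(1,3,5,4,6-17)] .

end
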